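(* Let $\varepsilon>0$ and $f^\varepsilon\in L^2(\Omega)$. Let $\phi^\varepsilon\in\mathcal{V}$ satisfy $$\int_\Omega \nabla\cdot(b\phi^\varepsilon)\,\nabla\cdot(b\psi)\,dx+\varepsilon\int_\Omega\phi^\varepsilon\psi\,dx=\int_\Omega f^\varepsilon\psi\,dx\quad\text{for all }\psi\in\mathcal{V},$$ and write $\phi^\varepsilon=p^\varepsilon+q^\varepsilon$ with $p^\varepsilon\in K$, $q^\varepsilon\in K^\perp$. Then $$q^\varepsilon=b\cdot\nabla h^\varepsilon,$$ where $h^\varepsilon\in\mathcal{W}_0$ satisfies, for all $\theta\in\mathcal{W}_0$ (with $\nabla\cdot((b\otimes b)\nabla\theta)=\nabla\cdot(b\,(b\cdot\nabla\theta))$ in $L^2(\Omega)$ for the relevant functions), $$\int_\Omega \nabla\cdot\big((b\otimes b)\nabla h^\varepsilon\big)\,\nabla\cdot\big((b\otimes b)\nabla\theta\big)\,dx+\varepsilon\int_\Omega(b\cdot\nabla h^\varepsilon)(b\cdot\nabla\theta)\,dx=\int_\Omega f^\varepsilon\,(b\cdot\nabla\theta)\,dx .$$ This is the weak form of the fourth-order problem $$-\nabla\cdot\Big[(b\otimes b)\nabla\big(\nabla\cdot((b\otimes b)\nabla h^\varepsilon)\big)\Big]+\varepsilon\,\nabla\cdot\big((b\otimes b)\nabla h^\varepsilon\big)=\nabla\cdot(bf^\varepsilon)\ \text{in }\Omega,$$ $$(b\cdot\nu)\,\nabla\cdot\big((b\otimes b)\nabla h^\varepsilon\big)=0\ \text{on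 }\partial\Omega,\qquad (b\cdot\nu)h^\varepsilon=0\ \text{on }\partial\Omega.$$
   Context: Let $\Omega\subset\mathbb{R}^d$ ($d=2$ or $3$) be a bounded domain with Lipschitz boundary and unit outward normal $\nu$, and $b$ a $C^1$ unit vector field on $\overline{\Omega}$; $b\otimes b$ is the matrix $(b_ib_j)$, so $(b\otimes b)\nabla h=b\,(b\cdot\nabla h)$. Spaces (derivatives in the distributional sense): $\mathcal{V}=\{\phi\in L^2(\Omega) : \nabla\cdot(b\phi)\in L^2(\Omega)\}$, $K=\{\phi\in\mathcal{V} : \nabla\cdot(b\phi)=0\}$, $\mathcal{W}=\{h\in L^2(\Omega) : (b\cdot\nabla)h\in L^2(\Omega)\}$, $\mathcal{W}_0=\{h\in\mathcal{W} : (b\cdot\nu)h=0\text{ on }\partial\Omega\}$; $K^\perp$ is the orthogonal complement of $K$ in $L^2(\Omega)$. Standing assumption: $K$ is closed in $L^2(\Omega)$ and $K^\perp=(b\cdot\nabla)\mathcal{W}_0$ (this holds, e.g., when every field line of $b$ either is tangent to $\partial\Omega$ on a set of positive measure or enters and leaves $\Omega$ through points $x_\mp$ with $\mp(b\cdot\nu)(x_\mp)>0$, with uniformly bounded arc lengths). *)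

theory Defs
  imports "HOL-Analysis.Analysis"
begin

fun Ck :: "nat \<Rightarrow> ('a::euclidean_space \<Rightarrow> real) \<Rightarrow> bool" where
  "Ck 0 f = continuous_on UNIV f"
| "Ck (Suc k) f = ((\<forall>x. f differentiable (at x)) \<and>
                    (\<forall>v. Ck k (\<lambda>x. frechet_derivative f (at x) v)))"

definition smooth :: "('a::euclidean_space \<Rightarrow> real) \<Rightarrow> bool" where
  "smooth f \<longleftrightarrow> (\<forall>k. Ck k f)"

definition test_fun :: "'a::euclidean_space set \<Rightarrow> ('a \<Rightarrow> real) \<Rightarrow> bool" where
  "test_fun \<Omega> w \<longleftrightarrow> smooth w \<and> (\<exists>C. compact C \<and> C \<subseteq> \<Omega> \<and> (\<forall>x. x \<notin> C \<longrightarrow> w x = 0))"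

definition cdiv :: "('a::euclidean_space \<Rightarrow> 'a) \<Rightarrow> 'a \<Rightarrow> real" where
  "cdiv F x = (\<Sum>i\<in>Basis. frechet_derivative F (at x) i \<bullet> i)"

definition cdir :: "('a::euclidean_space \<Rightarrow> 'a) \<Rightarrow> ('a \<Rightarrow> real) \<Rightarrow> 'a \<Rightarrow> real" where
  "cdir b w x = frechet_derivative w (at x) (b x)"

definition lipschitz_domain :: "'a::euclidean_space set \<Rightarrow> bool" where
  "lipschitz_domain \<Omega> \<longleftrightarrow> open \<Omega> \<and> bounded \<Omega> \<and> connected \<Omega> \<and> \<Omega> \<noteq> {} \<and>
     (\<forall>x\<in>frontier \<Omega>. \<exists>r>0. \<exists>e. norm e = 1 \<and> (\<exists>g :: 'a \<Rightarrow> real. \<exists>L.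
         (\<forall>y z. \<bar>g y - g z\<bar> \<le> L * norm (y - z)) \<and>
         \<Omega> \<inter> ball x r = {y \<in> ball x r. y \<bullet> e < g (y - (y \<bullet> e) *\<^sub>R e)}))"

definition C1_unit_field :: "'a::euclidean_space set \<Rightarrow> ('a \<Rightarrow> 'a) \<Rightarrow> bool" where
  "C1_unit_field \<Omega> b \<longleftrightarrow> (\<forall>x\<in>closure \<Omega>. norm (b x) = 1) \<and>
     (\<exists>U b'. open U \<and> closure \<Omega> \<subseteq> U \<and> continuous_on U b' \<and>
        (\<forall>x\<in>U. (b has_derivative blinfun_apply (b' x)) (at x)))"

definition L2 :: "'a::euclidean_space set \<Rightarrow> ('a \<Rightarrow> real) \<Rightarrow> bool" where
  "L2 \<Omega> f \<longleftrightarrow> f \<in> borel_measurable (lebesgue_on \<Omega>) \<and>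
                integrable (lebesgue_on \<Omega>) (\<lambda>x. (f x)\<^sup>2)"

definition ip :: "'a::euclidean_space set \<Rightarrow> ('a \<Rightarrow> real) \<Rightarrow> ('a \<Rightarrow> real) \<Rightarrow> real" where
  "ip \<Omega> f g = integral\<^sup>L (lebesgue_on \<Omega>) (\<lambda>x. f x * g x)"

definition ae_eq :: "'a::euclidean_space set \<Rightarrow> ('a \<Rightarrow> real) \<Rightarrow> ('a \<Rightarrow> real) \<Rightarrow> bool" where
  "ae_eq \<Omega> f g \<longleftrightarrow> (AE x in lebesgue_on \<Omega>. f x = g x)"

text \<open>g is the distributional divergence div(b phi) in Omega.\<close>
definition weak_div :: "'a::euclidean_space set \<Rightarrow> ('a \<Rightarrow> 'a) \<Rightarrow> ('a \<Rightarrow> real) \<Rightarrow> ('a \<Rightarrow> real) \<Rightarrow> bool" where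
  "weak_div \<Omega> b \<phi> g \<longleftrightarrow> (\<forall>w. test_fun \<Omega> w \<longrightarrow> ip \<Omega> \<phi> (cdir b w) = - ip \<Omega> g w)"

text \<open>g is the distributional derivative (b . grad) h in Omega.\<close>
definition weak_bgrad :: "'a::euclidean_space set \<Rightarrow> ('a \<Rightarrow> 'a) \<Rightarrow> ('a \<Rightarrow> real) \<Rightarrow> ('a \<Rightarrow> real) \<Rightarrow> bool" where
  "weak_bgrad \<Omega> b h g \<longleftrightarrow>
     (\<forall>w. test_fun \<Omega> w \<longrightarrow> ip \<Omega> h (cdiv (\<lambda>y. w y *\<^sub>R b y)) = - ip \<Omega> g w)"

definition V_space :: "'a::euclidean_space set \<Rightarrow> ('a \<Rightarrow> 'a) \<Rightarrow> ('a \<Rightarrow> real) set" where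
  "V_space \<Omega> b = {\<phi>. L2 \<Omega> \<phi> \<and> (\<exists>g. L2 \<Omega> g \<and> weak_div \<Omega> b \<phi> g)}"

definition K_space :: "'a::euclidean_space set \<Rightarrow> ('a \<Rightarrow> 'a) \<Rightarrow> ('a \<Rightarrow> real) set" where
  "K_space \<Omega> b = {\<phi>. L2 \<Omega> \<phi> \<and> weak_div \<Omega> b \<phi> (\<lambda>_. 0)}"

definition W_space :: "'a::euclidean_space set \<Rightarrow> ('a \<Rightarrow> 'a) \<Rightarrow> ('a \<Rightarrow> real) set" where
  "W_space \<Omega> b = {h. L2 \<Omega> h \<and> (\<exists>g. L2 \<Omega> g \<and> weak_bgrad \<Omega> b h g)}"

text \<open>Boundary condition (b . nu) h = 0 on the boundary, in the weak (Green formula) sense: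
  for all smooth psi on the whole space (no support condition),
  integral of ((b.grad)h) psi + h div(b psi) over Omega vanishes.\<close>
definition W0_space :: "'a::euclidean_space set \<Rightarrow> ('a \<Rightarrow> 'a) \<Rightarrow> ('a \<Rightarrow> real) set" where
  "W0_space \<Omega> b = {h. L2 \<Omega> h \<and> (\<exists>g. L2 \<Omega> g \<and> weak_bgrad \<Omega> b h g \<and>
      (\<forall>\<psi>. smooth \<psi> \<longrightarrow> ip \<Omega> g \<psi> + ip \<Omega> h (cdiv (\<lambda>y. \<psi> y *\<^sub>R b y)) = 0))}"

definition perp :: "'a::euclidean_space set \<Rightarrow> ('a \<Rightarrow> real) set \<Rightarrow> ('a \<Rightarrow> real) set" where
  "perp \<Omega> S = {q. L2 \<Omega> q \<and> (\<forall>k\<in>S. ip \<Omega> q k = 0)}"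

definition L2_closed :: "'a::euclidean_space set \<Rightarrow> ('a \<Rightarrow> real) set \<Rightarrow> bool" where
  "L2_closed \<Omega> S \<longleftrightarrow> (\<forall>u k. (\<forall>n. u n \<in> S) \<longrightarrow> L2 \<Omega> k \<longrightarrow>
      ((\<lambda>n. integral\<^sup>L (lebesgue_on \<Omega>) (\<lambda>x. (u n x - k x)\<^sup>2)) \<longlonglongrightarrow> 0) \<longrightarrow> k \<in> S)"

end

theory Submission
  imports Defs
begin

lemma L2_mult_integrable:
  assumes "L2 \<Omega> f" "L2 \<Omega> g"
  shows "integrable (lebesgue_on \<Omega>) (\<lambda>x. f x * g x)"
proof (rule Bochner_Integration.integrable_bound[where f="\<lambda>x. (f x)\<^sup>2 + (g x)\<^sup>2"])
  show "integrable (lebesgue_on \<Omega>) (\<lambda>x. (f x)\<^sup>2 + (g x)\<^sup>2)"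
    using assms unfolding L2_def by auto
  show "(\<lambda>x. f x * g x) \<in> borel_measurable (lebesgue_on \<Omega>)"
    using assms unfolding L2_def by auto
  show "AE x in lebesgue_on \<Omega>. norm (f x * g x) \<le> norm ((f x)\<^sup>2 + (g x)\<^sup>2)"
  proof (rule AE_I2)
    fix x
    have "\<bar>f x * g x\<bar> \<le> (f x)\<^sup>2 + (g x)\<^sup>2"
    proof -
      have "0 \<le> (\<bar>f x\<bar> - \<bar>g x\<bar>)\<^sup>2" by simp
      then have "2 * (\<bar>f x\<bar> * \<bar>g x\<bar>) \<le> \<bar>f x\<bar>\<^sup>2 + \<bar>g x\<bar>\<^sup>2"
        by (simp add: power2_diff)
      then have "2 * \<bar>f x * g x\<bar> \<le> (f x)\<^sup>2 + (g x)\<^sup>2" by (simp add: abs_mult)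
      then show ?thesis by simp
    qed
    then show "norm (f x * g x) \<le> norm ((f x)\<^sup>2 + (g x)\<^sup>2)" by simp
  qed
qed

lemma ip_cong_ae:
  assumes "L2 \<Omega> f" "L2 \<Omega> f'" "L2 \<Omega> c" "AE x in lebesgue_on \<Omega>. f x = f' x"
  shows "ip \<Omega> f c = ip \<Omega> f' c"
  unfolding ip_def
  by (rule integral_cong_AE) (use assms in \<open>auto simp: L2_def\<close>)

lemma ip_add:
  assumes "L2 \<Omega> f" "L2 \<Omega> g" "L2 \<Omega> c"
  shows "ip \<Omega> (\<lambda>x. f x + g x) c = ip \<Omega> f c + ip \<Omega> g c"
proof -
  have "ip \<Omega> (\<lambda>x. f x + g x) c = integral\<^sup>L (lebesgue_on \<Omega>) (\<lambda>x. f x * c x + g x * c x)"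
    unfolding ip_def by (simp add: distrib_right)
  also have "\<dots> = ip \<Omega> f c + ip \<Omega> g c"
    unfolding ip_def using L2_mult_integrable[OF assms(1,3)] L2_mult_integrable[OF assms(2,3)]
    by simp
  finally show ?thesis .
qed

lemma cdir_L2:
  assumes "test_fun \<Omega> w" "C1_unit_field \<Omega> b" "bounded \<Omega>" "open \<Omega>"
  shows "L2 \<Omega> (cdir b w)"
proof -
  have "Ck 1 w" using assms(1) unfolding test_fun_def smooth_def by blast
  then have diff: "\<And>x. w differentiable (at x)"
    and D: "\<And>v. continuous_on UNIV (\<lambda>x. frechet_derivative w (at x) v)" by auto
  obtain U b' where U: "open U" "closure \<Omega> \<subseteq> U"
    "\<And>x. x \<in> U \<Longrightarrow> (b has_derivative blinfun_apply (b' x)) (at x)"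
    using assms(2) unfolding C1_unit_field_def by blast
  have bc: "continuous_on (closure \<Omega>) b"
    using U by (meson continuous_at_imp_continuous_on has_derivative_continuous subsetD)
  have eq: "cdir b w x = (\<Sum>i\<in>Basis. (b x \<bullet> i) * frechet_derivative w (at x) i)" for x
  proof -
    have lin: "linear (frechet_derivative w (at x))"
      using diff[of x] frechet_derivative_works has_derivative_linear by blast
    have "cdir b w x = frechet_derivative w (at x) (\<Sum>i\<in>Basis. (b x \<bullet> i) *\<^sub>R i)"
      unfolding cdir_def by (simp add: euclidean_representation)
    also have "\<dots> = (\<Sum>i\<in>Basis. (b x \<bullet> i) * frechet_derivative w (at x) i)"
      using lin by (simp add: linear_sum linear_scale)
    finally show ?thesis .
  qed
  have cc: "continuous_on (closure \<Omega>) (cdir b w)"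
    unfolding eq
    by (intro continuous_on_sum continuous_on_mult continuous_on_inner bc continuous_on_const
        continuous_on_subset[OF D]) auto
  have "compact (closure \<Omega>)" using assms(3) by (simp add: compact_closure)
  then have "compact (cdir b w ` closure \<Omega>)" using cc compact_continuous_image by blast
  then obtain M where M: "\<And>x. x \<in> closure \<Omega> \<Longrightarrow> norm (cdir b w x) \<le> M"
    using compact_imp_bounded bounded_iff by (metis imageI)
  have lm: "\<Omega> \<in> lmeasurable" using assms(3,4) lmeasurable_open by blast
  have meas: "cdir b w \<in> borel_measurable (lebesgue_on \<Omega>)"
    by (rule continuous_imp_measurable_on_sets_lebesgue)
       (use continuous_on_subset[OF cc closure_subset] lm in \<open>auto\<close>)
  interpret finite_measure "lebesgue_on \<Omega>" using finite_measure_lebesgue_on[OF lm] .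
  have "integrable (lebesgue_on \<Omega>) (\<lambda>x. (cdir b w x)\<^sup>2)"
  proof (rule integrable_const_bound[where B="M\<^sup>2"])
    show "(\<lambda>x. (cdir b w x)\<^sup>2) \<in> borel_measurable (lebesgue_on \<Omega>)" using meas by auto
    show "AE x in lebesgue_on \<Omega>. norm ((cdir b w x)\<^sup>2) \<le> M\<^sup>2"
    proof (rule AE_I2)
      fix x assume x: "x \<in> space (lebesgue_on \<Omega>)"
      have "x \<in> closure \<Omega>" using x closure_subset by auto
      then have "\<bar>cdir b w x\<bar> \<le> M" using M by simp
      then have "\<bar>cdir b w x\<bar> ^ 2 \<le> M ^ 2"
        by (intro power_mono) auto
      then show "norm ((cdir b w x)\<^sup>2) \<le> M\<^sup>2" by (simp add: real_norm_def)
    qed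
  qed
  then show ?thesis using meas unfolding L2_def by blast
qed

theorem proposition2p3:
  fixes \<Omega> :: "'a::euclidean_space set" and b :: "'a \<Rightarrow> 'a"
    and \<epsilon> :: real and f \<phi> p q \<phi>div :: "'a \<Rightarrow> real"
  assumes dim: "DIM('a) = 2 \<or> DIM('a) = 3"
    and dom: "lipschitz_domain \<Omega>"
    and bfield: "C1_unit_field \<Omega> b"
    and Kclosed: "L2_closed \<Omega> (K_space \<Omega> b)"
    and Kperp: "perp \<Omega> (K_space \<Omega> b) =
                {q. L2 \<Omega> q \<and> (\<exists>h g. h \<in> W0_space \<Omega> b \<and> L2 \<Omega> g \<and>
                                    weak_bgrad \<Omega> b h g \<and> ae_eq \<Omega> q g)}"
    and eps: "\<epsilon> > 0"
    and f: "L2 \<Omega> f"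
    and phiV: "\<phi> \<in> V_space \<Omega> b"
    and phidiv: "L2 \<Omega> \<phi>div" "weak_div \<Omega> b \<phi> \<phi>div"
    and weak: "\<And>\<psi> \<psi>div. \<psi> \<in> V_space \<Omega> b \<Longrightarrow> L2 \<Omega> \<psi>div \<Longrightarrow> weak_div \<Omega> b \<psi> \<psi>div \<Longrightarrow>
                 ip \<Omega> \<phi>div \<psi>div + \<epsilon> * ip \<Omega> \<phi> \<psi> = ip \<Omega> f \<psi>"
    and pK: "p \<in> K_space \<Omega> b"
    and qKp: "q \<in> perp \<Omega> (K_space \<Omega> b)"
    and decomp: "ae_eq \<Omega> \<phi> (\<lambda>x. p x + q x)"
  shows "\<exists>h bh Dh. h \<in> W0_space \<Omega> b \<and> L2 \<Omega> bh \<and> weak_bgrad \<Omega> b h bh \<and>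
           ae_eq \<Omega> q bh \<and> L2 \<Omega> Dh \<and> weak_div \<Omega> b bh Dh \<and>
           (\<forall>\<theta> b\<theta> D\<theta>. \<theta> \<in> W0_space \<Omega> b \<longrightarrow> L2 \<Omega> b\<theta> \<longrightarrow> weak_bgrad \<Omega> b \<theta> b\<theta> \<longrightarrow>
               L2 \<Omega> D\<theta> \<longrightarrow> weak_div \<Omega> b b\<theta> D\<theta> \<longrightarrow>
               ip \<Omega> Dh D\<theta> + \<epsilon> * ip \<Omega> bh b\<theta> = ip \<Omega> f b\<theta>)"
proof -
  have Lphi: "L2 \<Omega> \<phi>" using phiV unfolding V_space_def by blast
  have Lp: "L2 \<Omega> p" and pdiv: "weak_div \<Omega> b p (\<lambda>_. 0)" using pK unfolding K_space_def by blast+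
  have Lq: "L2 \<Omega> q" using qKp unfolding perp_def by blast
  from qKp Kperp obtain h g where hW: "h \<in> W0_space \<Omega> b" and Lg: "L2 \<Omega> g"
    and hg: "weak_bgrad \<Omega> b h g" and qg: "ae_eq \<Omega> q g" by blast
  have opn: "open \<Omega>" using conjunct1[OF dom[unfolded lipschitz_domain_def]] .
  have bnd: "bounded \<Omega>" using conjunct1[OF conjunct2[OF dom[unfolded lipschitz_domain_def]]] .
  have Lpq: "L2 \<Omega> (\<lambda>x. p x + q x)"
  proof -
    have "(\<lambda>x. p x * p x + 2 * (p x * q x) + q x * q x) = (\<lambda>x. (p x + q x)\<^sup>2)"
      by (simp add: power2_eq_square algebra_simps)
    moreover have "integrable (lebesgue_on \<Omega>) (\<lambda>x. p x * p x + 2 * (p x * q x) + q x * q x)"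
      using L2_mult_integrable[OF Lp Lp] L2_mult_integrable[OF Lp Lq] L2_mult_integrable[OF Lq Lq]
      by auto
    ultimately show ?thesis using Lp Lq unfolding L2_def by auto
  qed
  have divg: "weak_div \<Omega> b g \<phi>div"
    unfolding weak_div_def
  proof (intro allI impI)
    fix w assume w: "test_fun \<Omega> w"
    have Lc: "L2 \<Omega> (cdir b w)" using cdir_L2[OF w bfield bnd opn] .
    have "ip \<Omega> g (cdir b w) = ip \<Omega> q (cdir b w)"
      using ip_cong_ae[OF Lq Lg Lc] qg unfolding ae_eq_def by simp
    also have "\<dots> = ip \<Omega> p (cdir b w) + ip \<Omega> q (cdir b w)"
      using pdiv w unfolding weak_div_def ip_def by simp
    also have "\<dots> = ip \<Omega> (\<lambda>x. p x + q x) (cdir b w)" using ip_add[OF Lp Lq Lc] by simp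
    also have "\<dots> = ip \<Omega> \<phi> (cdir b w)"
      using ip_cong_ae[OF Lphi Lpq Lc] decomp unfolding ae_eq_def by simp
    also have "\<dots> = - ip \<Omega> \<phi>div w" using phidiv(2) w unfolding weak_div_def by simp
    finally show "ip \<Omega> g (cdir b w) = - ip \<Omega> \<phi>div w" .
  qed
  show ?thesis
  proof (intro exI conjI allI impI)
    show "h \<in> W0_space \<Omega> b" "L2 \<Omega> g" "weak_bgrad \<Omega> b h g" "ae_eq \<Omega> q g"
      "L2 \<Omega> \<phi>div" "weak_div \<Omega> b g \<phi>div" by fact+
    fix \<theta> b\<theta> D\<theta>
    assume th: "\<theta> \<in> W0_space \<Omega> b" and Lb: "L2 \<Omega> b\<theta>" and tb: "weak_bgrad \<Omega> b \<theta> b\<theta>"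
      and LD: "L2 \<Omega> D\<theta>" and bD: "weak_div \<Omega> b b\<theta> D\<theta>"
    have bV: "b\<theta> \<in> V_space \<Omega> b" using Lb LD bD unfolding V_space_def by blast
    have bperp: "b\<theta> \<in> perp \<Omega> (K_space \<Omega> b)"
      unfolding Kperp using th Lb tb unfolding ae_eq_def by blast
    have p0: "ip \<Omega> p b\<theta> = 0"
    proof -
      have "ip \<Omega> b\<theta> p = 0" using bperp pK unfolding perp_def by blast
      then show ?thesis unfolding ip_def by (simp add: mult.commute)
    qed
    have "ip \<Omega> \<phi> b\<theta> = ip \<Omega> (\<lambda>x. p x + q x) b\<theta>"
      using ip_cong_ae[OF Lphi Lpq Lb] decomp unfolding ae_eq_def by simp
    also have "\<dots> = ip \<Omega> q b\<theta>" using ip_add[OF Lp Lq Lb] p0 by simp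
    also have "\<dots> = ip \<Omega> g b\<theta>"
      using ip_cong_ae[OF Lq Lg Lb] qg unfolding ae_eq_def by simp
    finally have "ip \<Omega> \<phi> b\<theta> = ip \<Omega> g b\<theta>" .
    then show "ip \<Omega> \<phi>div D\<theta> + \<epsilon> * ip \<Omega> g b\<theta> = ip \<Omega> f b\<theta>"
      using weak[OF bV LD bD] by simp
  qed
qed

end
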